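(* Let $(\Omega,\mathcal{F},\mathbb{P})$ be a complete probability space, $E$ a Polish space, and $X=\{X_t\}_{t\geq0}$ an $E$-valued stochastic process, with each atomic proposition $a$ interpreted by a Borel set $B_a\subset E$. Let $\phi_1,\phi_2$ be MTL-formulas such that $\llbracket\phi_1\rrbracket$ and $\llbracket\phi_2\rrbracket$ belong to $\mathcal{F}\otimes\mathcal{B}([0,\infty))$, and let $I$ be an interval in $[0,\infty)$. Then $\{(\omega,t) : X(\omega),t\models\phi_1\mathcal{U}_I\phi_2\}\in\mathcal{F}\otimes\mathcal{B}([0,\infty))$.
   Context: MTL-formulas: $\phi::=a\mid\phi_1\wedge\phi_2\mid\lnot\phi\mid\phi_1\mathcal{U}_I\phi_2$, $I$ an interval in $[0,\infty)$ (any endpoint type, possibly unbounded). Semantics: $X(\omega),t\models a$ iff $X_t(\omega)\in B_a$; $\lnot,\wedge$ classical; $X(\omega),t\models\phi_1\mathcal{U}_I\phi_2$ iff there exists $s\in I$ with $X(\omega),t+s\models\phi_2$ and $X(\omega),s'\models\phi_1$ for all $s'\in[t,t+s)$. $\llbracket\phi\rrbracket:=\{(\omega,t)\in\Omega\times[0,\infty) : X(\omega),t\models\phi\}$. *)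

theory Defs
  imports "HOL-Probability.Probability"
begin

datatype 'ap mtl =
    Atom 'ap
  | And "'ap mtl" "'ap mtl"
  | Not "'ap mtl"
  | Until "'ap mtl" "real set" "'ap mtl"

definition time_interval :: "real set \<Rightarrow> bool" where
  "time_interval I \<longleftrightarrow> is_interval I \<and> I \<subseteq> {0..}"

primrec wf_mtl :: "'ap mtl \<Rightarrow> bool" where
  "wf_mtl (Atom a) = True"
| "wf_mtl (And p q) = (wf_mtl p \<and> wf_mtl q)"
| "wf_mtl (Not p) = wf_mtl p"
| "wf_mtl (Until p I q) = (time_interval I \<and> wf_mtl p \<and> wf_mtl q)"

text \<open>Satisfaction: X t \<omega> is X_t(\<omega>), B a is the set interpreting atom a.\<close>
primrec sat :: "(real \<Rightarrow> 'w \<Rightarrow> 'e) \<Rightarrow> ('ap \<Rightarrow> 'e set) \<Rightarrow> 'w \<Rightarrow> real \<Rightarrow> 'ap mtl \<Rightarrow> bool" where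
  "sat X B \<omega> t (Atom a) = (X t \<omega> \<in> B a)"
| "sat X B \<omega> t (And p q) = (sat X B \<omega> t p \<and> sat X B \<omega> t q)"
| "sat X B \<omega> t (Not p) = (\<not> sat X B \<omega> t p)"
| "sat X B \<omega> t (Until p I q) =
     (\<exists>s\<in>I. sat X B \<omega> (t + s) q \<and> (\<forall>s'\<in>{t..<t + s}. sat X B \<omega> s' p))"

definition denot :: "'w measure \<Rightarrow> (real \<Rightarrow> 'w \<Rightarrow> 'e) \<Rightarrow> ('ap \<Rightarrow> 'e set) \<Rightarrow> 'ap mtl \<Rightarrow> ('w \<times> real) set" where
  "denot M X B \<phi> = {(\<omega>, t). \<omega> \<in> space M \<and> 0 \<le> t \<and> sat X B \<omega> t \<phi>}"

definition prod_time :: "'w measure \<Rightarrow> ('w \<times> real) measure" where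
  "prod_time M = M \<Otimes>\<^sub>M restrict_space borel {0::real..}"

end

theory Submission
  imports Defs "HOL-Library.Nat_Bijection"
begin

definition pre :: "(nat \<Rightarrow> nat) \<Rightarrow> nat \<Rightarrow> nat list" where
  "pre \<sigma> n = map \<sigma> [0..<n]"

definition suslin :: "(nat list \<Rightarrow> 'a set) \<Rightarrow> 'a set" where
  "suslin C = (\<Union>\<sigma>. \<Inter>n. C (pre \<sigma> (Suc n)))"

lemma length_pre[simp]: "length (pre \<sigma> n) = n"
  by (simp add: pre_def)

lemma pre_0[simp]: "pre \<sigma> 0 = []"
  by (simp add: pre_def)

lemma pre_Suc: "pre \<sigma> (Suc n) = pre \<sigma> n @ [\<sigma> n]"
  by (simp add: pre_def)

lemma take_pre: "k \<le> n \<Longrightarrow> take k (pre \<sigma> n) = pre \<sigma> k"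
  by (simp add: pre_def take_map)

lemma nth_pre: "i < n \<Longrightarrow> pre \<sigma> n ! i = \<sigma> i"
  by (simp add: pre_def)

lemma measurable_hull:
  assumes "finite_measure M" "S \<subseteq> space M"
  shows "\<exists>H\<in>sets M. S \<subseteq> H \<and> (\<forall>G\<in>sets M. S \<subseteq> G \<longrightarrow> measure M H \<le> measure M G)"
proof -
  interpret finite_measure M by fact
  let ?V = "measure M ` {G\<in>sets M. S \<subseteq> G}"
  define m where "m = Inf ?V"
  have ne: "?V \<noteq> {}" using assms by auto
  have bdd: "bdd_below ?V" by (auto intro: bdd_belowI[of _ 0])
  have "\<forall>n::nat. \<exists>G. G \<in> sets M \<and> S \<subseteq> G \<and> measure M G < m + 1/Suc n"
  proof
    fix n :: nat
    have "m < m + 1/Suc n" by simp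
    then obtain v where "v \<in> ?V" "v < m + 1/Suc n"
      unfolding m_def using cInf_less_iff[OF ne bdd] by blast
    then show "\<exists>G. G \<in> sets M \<and> S \<subseteq> G \<and> measure M G < m + 1/Suc n" by blast
  qed
  from choice[OF this] obtain G where G0: "\<forall>n. G n \<in> sets M \<and> S \<subseteq> G n \<and> measure M (G n) < m + 1/Suc n"
    by blast
  have G: "\<And>n. G n \<in> sets M" "\<And>n. S \<subseteq> G n" "\<And>n. measure M (G n) < m + 1/Suc n"
    using G0 by auto
  let ?H = "\<Inter>n. G n"
  have Hs: "?H \<in> sets M" using G by auto
  have HS: "S \<subseteq> ?H" using G by auto
  have le: "measure M ?H \<le> measure M (G n)" for n
    using G Hs by (intro finite_measure_mono) auto
  have "measure M ?H \<le> m"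
  proof (rule ccontr)
    assume "\<not> ?thesis"
    then have "0 < measure M ?H - m" by simp
    then obtain n where n: "inverse (real (Suc n)) < measure M ?H - m"
      using reals_Archimedean by blast
    have "measure M ?H < m + 1/Suc n" using le[of n] G(3)[of n] by linarith
    with n show False by (simp add: field_simps)
  qed
  moreover have "m \<le> measure M G'" if "G' \<in> sets M" "S \<subseteq> G'" for G'
    unfolding m_def using that bdd by (intro cInf_lower) auto
  ultimately show ?thesis using Hs HS by (meson order_trans)
qed

lemma suslin_complete:
  assumes fm: "finite_measure M" and cm: "complete_measure M"
    and C: "\<And>s. C s \<in> sets M"
  shows "suslin C \<in> sets M"
proof -
  interpret finite_measure M by fact
  define C' where "C' s = space M \<inter> (\<Inter>k\<in>{1..length s}. C (take k s))" for s
  have C'_sets: "C' s \<in> sets M" for s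
    unfolding C'_def using C by (cases "s = []") (auto intro!: sets.finite_INT)
  have C'_mono: "C' (s @ [k]) \<subseteq> C' s" for s k
    unfolding C'_def by force
  have S_eq: "suslin C = (\<Union>\<sigma>. \<Inter>n. C' (pre \<sigma> n))"
  proof (intro equalityI subsetI)
    fix x assume "x \<in> suslin C"
    then obtain \<sigma> where s: "\<And>n. x \<in> C (pre \<sigma> (Suc n))" by (auto simp: suslin_def)
    have xs: "x \<in> space M" using sets.sets_into_space[OF C] s[of 0] by blast
    have "x \<in> C' (pre \<sigma> n)" for n
    proof -
      have "x \<in> C (take k (pre \<sigma> n))" if "k \<in> {1..n}" for k
        using s[of "k - 1"] that by (simp add: take_pre)
      then show ?thesis using xs by (auto simp: C'_def)
    qed
    then show "x \<in> (\<Union>\<sigma>. \<Inter>n. C' (pre \<sigma> n))" by blast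
  next
    fix x assume "x \<in> (\<Union>\<sigma>. \<Inter>n. C' (pre \<sigma> n))"
    then obtain \<sigma> where s: "\<And>n. x \<in> C' (pre \<sigma> n)" by blast
    have "x \<in> C (pre \<sigma> (Suc n))" for n
    proof -
      have "x \<in> (\<Inter>k\<in>{1..length (pre \<sigma> (Suc n))}. C (take k (pre \<sigma> (Suc n))))"
        using s[of "Suc n"] unfolding C'_def by blast
      then have "x \<in> C (take (Suc n) (pre \<sigma> (Suc n)))" by (rule INT_D) simp
      then show ?thesis by simp
    qed
    then show "x \<in> suslin C" by (auto simp: suslin_def)
  qed
  define R where "R s = {x. \<exists>\<sigma>. pre \<sigma> (length s) = s \<and> (\<forall>n. x \<in> C' (pre \<sigma> n))}" for s
  have R0: "R [] = suslin C" unfolding S_eq R_def by auto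
  have R_sub: "R s \<subseteq> C' s" for s
  proof
    fix x assume "x \<in> R s"
    then obtain \<sigma> where "pre \<sigma> (length s) = s" "\<forall>n. x \<in> C' (pre \<sigma> n)" unfolding R_def by blast
    then show "x \<in> C' s" by metis
  qed
  have R_split: "R s \<subseteq> (\<Union>k. R (s @ [k]))" for s
  proof
    fix x assume "x \<in> R s"
    then obtain \<sigma> where "pre \<sigma> (length s) = s" "\<forall>n. x \<in> C' (pre \<sigma> n)" unfolding R_def by blast
    then have "x \<in> R (s @ [\<sigma> (length s)])" unfolding R_def
      by (intro CollectI exI[of _ \<sigma>]) (simp add: pre_Suc)
    then show "x \<in> (\<Union>k. R (s @ [k]))" by blast
  qed
  have R_space: "R s \<subseteq> space M" for s using R_sub[of s] C'_sets[of s] sets.sets_into_space by blast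
  define hl where "hl S = (SOME H. H \<in> sets M \<and> S \<subseteq> H \<and> (\<forall>G\<in>sets M. S \<subseteq> G \<longrightarrow> measure M H \<le> measure M G))" for S
  have hl: "hl (R s) \<in> sets M \<and> R s \<subseteq> hl (R s) \<and> (\<forall>G\<in>sets M. R s \<subseteq> G \<longrightarrow> measure M (hl (R s)) \<le> measure M G)" for s
  proof -
    have "\<exists>H. H \<in> sets M \<and> R s \<subseteq> H \<and> (\<forall>G\<in>sets M. R s \<subseteq> G \<longrightarrow> measure M H \<le> measure M G)"
      using measurable_hull[OF fm R_space[of s]] by blast
    then show ?thesis unfolding hl_def by (rule someI_ex)
  qed
  define H where "H s = hl (R s) \<inter> C' s" for s
  have H_sets: "H s \<in> sets M" for s unfolding H_def using hl C'_sets by auto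
  have H_R: "R s \<subseteq> H s" for s unfolding H_def using hl R_sub by blast
  have H_C: "H s \<subseteq> C' s" for s unfolding H_def by blast
  have H_min: "measure M (H s) \<le> measure M G" if "G \<in> sets M" "R s \<subseteq> G" for s G
  proof -
    have "measure M (H s) \<le> measure M (hl (R s))"
      using hl H_sets by (intro finite_measure_mono) (auto simp: H_def)
    also have "\<dots> \<le> measure M G" using hl that by blast
    finally show ?thesis .
  qed
  define D where "D s = H s - (\<Union>k. H (s @ [k]))" for s
  have D_null: "D s \<in> null_sets M" for s
  proof -
    define G where "G = H s \<inter> (\<Union>k. H (s @ [k]))"
    have U: "(\<Union>k. H (s @ [k])) \<in> sets M" using H_sets by (intro sets.countable_UN) auto
    have Gs: "G \<in> sets M" unfolding G_def using H_sets U by (rule sets.Int)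
    have "R s \<subseteq> (\<Union>k. H (s @ [k]))" using H_R R_split[of s] by (meson SUP_mono' order_trans)
    then have "R s \<subseteq> G" unfolding G_def using H_R[of s] by (rule_tac Int_greatest)
    then have "measure M (H s) \<le> measure M G" using H_min Gs by blast
    moreover have DG: "D s = H s - G" unfolding D_def G_def by (simp only: Diff_Int Diff_cancel Un_empty_left)
    moreover have "measure M (H s - G) = measure M (H s) - measure M G"
      using Gs H_sets by (intro finite_measure_Diff) (auto simp: G_def)
    moreover have "H s - G \<in> sets M" using H_sets Gs by (rule sets.Diff)
    ultimately have "measure M (D s) = 0" "D s \<in> sets M"
      using measure_nonneg[of M "H s - G"] by simp_all
    then show ?thesis by (simp add: null_sets_def emeasure_eq_measure)
  qed
  define NS where "NS = (\<Union>s. D s)"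
  have NS_null: "NS \<in> null_sets M"
    unfolding NS_def by (rule null_sets_UN'[where I=UNIV, simplified]) (auto simp: D_null)
  have key: "H [] - suslin C \<subseteq> NS"
  proof
    fix x assume x: "x \<in> H [] - suslin C"
    show "x \<in> NS"
    proof (rule ccontr)
      assume nx: "x \<notin> NS"
      define f where "f = rec_nat [] (\<lambda>n l. l @ [SOME k. x \<in> H (l @ [k])])"
      have f0: "f 0 = []" and fS: "f (Suc n) = f n @ [SOME k. x \<in> H (f n @ [k])]" for n
        by (simp_all add: f_def)
      have fx: "x \<in> H (f n)" for n
      proof (induction n)
        case 0 then show ?case using x f0 by simp
      next
        case (Suc n)
        have "x \<notin> D (f n)" using nx unfolding NS_def by blast
        then have "\<exists>k. x \<in> H (f n @ [k])" using Suc unfolding D_def by blast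
        then show ?case unfolding fS by (rule someI_ex)
      qed
      have lf: "length (f n) = n" for n by (induction n) (simp_all add: f0 fS)
      define \<sigma> where "\<sigma> n = f (Suc n) ! n" for n
      have pf: "pre \<sigma> n = f n" for n
      proof (induction n)
        case 0 then show ?case by (simp add: f0)
      next
        case (Suc n)
        then show ?case by (simp add: pre_Suc \<sigma>_def fS nth_append lf)
      qed
      have "x \<in> C' (pre \<sigma> n)" for n using fx[of n] H_C[of "f n"] pf[of n] by auto
      then have "x \<in> suslin C" unfolding S_eq by blast
      with x show False by blast
    qed
  qed
  have "H [] - suslin C \<in> sets M"
    using complete_measure.complete[OF cm key NS_null] .
  moreover have "suslin C = H [] - (H [] - suslin C)" using H_R[of "[]"] R0 by blast
  ultimately show ?thesis using H_sets by (metis sets.Diff)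
qed

declare upt_Suc[simp del]

definition SP :: "'w measure \<Rightarrow> ('w \<times> real) set set" where
  "SP M = {suslin (\<lambda>s. A s \<times> K s) | A K. (\<forall>s. A s \<in> sets M) \<and> (\<forall>s. compact (K s))}"

lemma suslin_const: "suslin (\<lambda>s. X) = X"
  by (simp add: suslin_def)

lemma SP_const: "A \<in> sets M \<Longrightarrow> compact K \<Longrightarrow> A \<times> K \<in> SP M"
  unfolding SP_def mem_Collect_eq
  by (intro exI[of _ "\<lambda>s. A"] exI[of _ "\<lambda>s. K"] conjI) (auto simp: suslin_const)

lemma SP_sub: "P \<in> SP M \<Longrightarrow> P \<subseteq> space M \<times> UNIV"
proof -
  assume "P \<in> SP M"
  then obtain A K where P: "P = suslin (\<lambda>s. A s \<times> K s)" and A: "\<And>s. A s \<in> sets M"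
    unfolding SP_def by blast
  have "A s \<subseteq> space M" for s using A sets.sets_into_space by blast
  then show ?thesis unfolding P suslin_def by fast
qed

lemma pre_Suc_Cons: "pre \<sigma> (Suc n) = \<sigma> 0 # map \<sigma> [1..<Suc n]"
  by (simp add: pre_def upt_conv_Cons)

lemma pre_upd0: "pre (\<sigma>(0 := v)) (Suc n) = v # map \<sigma> [1..<Suc n]"
proof -
  have "map (\<sigma>(0:=v)) [1..<Suc n] = map \<sigma> [1..<Suc n]" by (rule map_cong) auto
  then show ?thesis by (simp add: pre_def upt_conv_Cons)
qed

lemma SP_Union:
  assumes "\<And>i::nat. P i \<in> SP M"
  shows "(\<Union>i. P i) \<in> SP M"
proof -
  have "\<forall>i. \<exists>AK. P i = suslin (\<lambda>s. fst AK s \<times> snd AK s) \<and> (\<forall>s. fst AK s \<in> sets M) \<and> (\<forall>s. compact (snd AK s))"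
    using assms unfolding SP_def by fastforce
  from choice[OF this] obtain AK where AK: "\<And>i. P i = suslin (\<lambda>s. fst (AK i) s \<times> snd (AK i) s)"
    "\<And>i s. fst (AK i) s \<in> sets M" "\<And>i s. compact (snd (AK i) s)" by blast
  define A where "A i = fst (AK i)" for i
  define K where "K i = snd (AK i)" for i
  define A' where "A' s = A (fst (prod_decode (hd s))) (snd (prod_decode (hd s)) # tl s)" for s
  define K' where "K' s = K (fst (prod_decode (hd s))) (snd (prod_decode (hd s)) # tl s)" for s
  have eq: "(\<Union>i. P i) = suslin (\<lambda>s. A' s \<times> K' s)"
  proof (intro equalityI subsetI)
    fix x assume "x \<in> (\<Union>i. P i)"
    then obtain i \<tau> where x: "\<And>n. x \<in> A i (pre \<tau> (Suc n)) \<times> K i (pre \<tau> (Suc n))"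
      unfolding AK A_def K_def suslin_def by blast
    define \<sigma> where "\<sigma> = \<tau>(0 := prod_encode (i, \<tau> 0))"
    have "map \<sigma> [1..<Suc n] = map \<tau> [1..<Suc n]" for n
      unfolding \<sigma>_def by (intro map_cong) auto
    then have P: "pre \<sigma> (Suc n) = prod_encode (i, \<tau> 0) # map \<tau> [1..<Suc n]" for n
      by (simp add: pre_Suc_Cons \<sigma>_def)
    have "A' (pre \<sigma> (Suc n)) \<times> K' (pre \<sigma> (Suc n)) = A i (pre \<tau> (Suc n)) \<times> K i (pre \<tau> (Suc n))" for n
      by (simp only: A'_def K'_def P list.sel prod_encode_inverse fst_conv snd_conv pre_Suc_Cons[of \<tau>])
    then show "x \<in> suslin (\<lambda>s. A' s \<times> K' s)" using x unfolding suslin_def by auto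
  next
    fix x assume "x \<in> suslin (\<lambda>s. A' s \<times> K' s)"
    then obtain \<sigma> where x: "\<And>n. x \<in> A' (pre \<sigma> (Suc n)) \<times> K' (pre \<sigma> (Suc n))"
      unfolding suslin_def by blast
    define i where "i = fst (prod_decode (\<sigma> 0))"
    define \<tau> where "\<tau> = \<sigma>(0 := snd (prod_decode (\<sigma> 0)))"
    have "A' (pre \<sigma> (Suc n)) \<times> K' (pre \<sigma> (Suc n)) = A i (pre \<tau> (Suc n)) \<times> K i (pre \<tau> (Suc n))" for n
      unfolding \<tau>_def pre_upd0 by (simp add: A'_def K'_def pre_Suc_Cons i_def)
    then have "x \<in> P i" using x unfolding AK A_def K_def suslin_def by auto
    then show "x \<in> (\<Union>i. P i)" by blast
  qed
  show ?thesis unfolding eq SP_def using AK(2,3)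
    by (intro CollectI exI[of _ A'] exI[of _ K']) (simp add: A'_def K'_def A_def K_def)
qed

lemma triangle_mono: "a \<le> b \<Longrightarrow> triangle a \<le> triangle b"
proof (induction b)
  case 0 then show ?case by simp
next
  case (Suc b) then show ?case by (cases "a = Suc b") auto
qed

lemma prod_encode_mono2: "j' \<le> j \<Longrightarrow> prod_encode (i, j') \<le> prod_encode (i, j)"
  by (simp add: prod_encode_def triangle_mono)

lemma SP_Inter:
  assumes "\<And>i::nat. P i \<in> SP M"
  shows "(\<Inter>i. P i) \<in> SP M"
proof -
  have "\<forall>i. \<exists>AK. P i = suslin (\<lambda>s. fst AK s \<times> snd AK s) \<and> (\<forall>s. fst AK s \<in> sets M) \<and> (\<forall>s. compact (snd AK s))"
    using assms unfolding SP_def by fastforce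
  from choice[OF this] obtain AK where AK: "\<And>i. P i = suslin (\<lambda>s. fst (AK i) s \<times> snd (AK i) s)"
    "\<And>i s. fst (AK i) s \<in> sets M" "\<And>i s. compact (snd (AK i) s)" by blast
  define A where "A i = fst (AK i)" for i
  define K where "K i = snd (AK i)" for i
  define sub where "sub s i j = map (\<lambda>j'. s ! prod_encode (i, j')) [0..<Suc j]" for s :: "nat list" and i j
  define A' where "A' s = (case prod_decode (length s - 1) of (i, j) \<Rightarrow> A i (sub s i j))" for s
  define K' where "K' s = (case prod_decode (length s - 1) of (i, j) \<Rightarrow> K i (sub s i j))" for s
  define proj where "proj \<sigma> i = (\<lambda>j. \<sigma> (prod_encode (i, j)))" for \<sigma> :: "nat \<Rightarrow> nat" and i
  have subpre: "sub (pre \<sigma> (Suc (prod_encode (i, j)))) i j = pre (proj \<sigma> i) (Suc j)" for \<sigma> i j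
  proof -
    have "pre \<sigma> (Suc (prod_encode (i, j))) ! prod_encode (i, j') = \<sigma> (prod_encode (i, j'))"
      if "j' < Suc j" for j'
      using prod_encode_mono2[of j' j i] that by (intro nth_pre) auto
    then show ?thesis unfolding sub_def pre_def proj_def by (intro map_cong) auto
  qed
  have lev: "A' (pre \<sigma> (Suc n)) \<times> K' (pre \<sigma> (Suc n)) =
      (case prod_decode n of (i, j) \<Rightarrow> A i (pre (proj \<sigma> i) (Suc j)) \<times> K i (pre (proj \<sigma> i) (Suc j)))" for \<sigma> n
  proof -
    obtain i j where d: "prod_decode n = (i, j)" by (cases "prod_decode n")
    then have n: "n = prod_encode (i, j)" by (metis prod_decode_inverse)
    show ?thesis unfolding A'_def K'_def using d subpre[of \<sigma> i j] n by simp
  qed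
  have lev_all: "(\<Inter>n. A' (pre \<sigma> (Suc n)) \<times> K' (pre \<sigma> (Suc n))) =
      (\<Inter>i. \<Inter>j. A i (pre (proj \<sigma> i) (Suc j)) \<times> K i (pre (proj \<sigma> i) (Suc j)))" for \<sigma>
  proof (intro equalityI subsetI)
    fix x assume x: "x \<in> (\<Inter>n. A' (pre \<sigma> (Suc n)) \<times> K' (pre \<sigma> (Suc n)))"
    show "x \<in> (\<Inter>i. \<Inter>j. A i (pre (proj \<sigma> i) (Suc j)) \<times> K i (pre (proj \<sigma> i) (Suc j)))"
    proof (intro INT_I)
      fix i j
      have "x \<in> A' (pre \<sigma> (Suc (prod_encode (i, j)))) \<times> K' (pre \<sigma> (Suc (prod_encode (i, j))))"
        using x by blast
      then show "x \<in> A i (pre (proj \<sigma> i) (Suc j)) \<times> K i (pre (proj \<sigma> i) (Suc j))"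
        unfolding lev by simp
    qed
  next
    fix x assume x: "x \<in> (\<Inter>i. \<Inter>j. A i (pre (proj \<sigma> i) (Suc j)) \<times> K i (pre (proj \<sigma> i) (Suc j)))"
    show "x \<in> (\<Inter>n. A' (pre \<sigma> (Suc n)) \<times> K' (pre \<sigma> (Suc n)))"
    proof
      fix n
      obtain i j where d: "prod_decode n = (i, j)" by (cases "prod_decode n")
      show "x \<in> A' (pre \<sigma> (Suc n)) \<times> K' (pre \<sigma> (Suc n))"
        unfolding lev d using x by simp
    qed
  qed
  have eq: "(\<Inter>i. P i) = suslin (\<lambda>s. A' s \<times> K' s)"
  proof (intro equalityI subsetI)
    fix x assume x: "x \<in> (\<Inter>i. P i)"
    have ex: "\<exists>\<tau>. \<forall>j. x \<in> A i (pre \<tau> (Suc j)) \<times> K i (pre \<tau> (Suc j))" for i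
    proof -
      have "x \<in> P i" using x by (rule INT_D) simp
      then show ?thesis unfolding AK suslin_def A_def K_def by (elim UN_E) (intro exI allI, erule INT_D, simp)
    qed
    obtain \<tau> where \<tau>: "\<And>i j. x \<in> A i (pre (\<tau> i) (Suc j)) \<times> K i (pre (\<tau> i) (Suc j))"
      using choice[of "\<lambda>i \<tau>. \<forall>j. x \<in> A i (pre \<tau> (Suc j)) \<times> K i (pre \<tau> (Suc j))"] ex by metis
    define \<sigma> where "\<sigma> k = \<tau> (fst (prod_decode k)) (snd (prod_decode k))" for k
    have pr: "proj \<sigma> i = \<tau> i" for i unfolding proj_def \<sigma>_def by simp
    have xs: "x \<in> (\<Inter>n. A' (pre \<sigma> (Suc n)) \<times> K' (pre \<sigma> (Suc n)))"
      unfolding lev_all pr by (intro INT_I) (rule \<tau>)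
    show "x \<in> suslin (\<lambda>s. A' s \<times> K' s)" 
      apply (unfold suslin_def)
      apply (rule UN_I[where a=\<sigma>])
      apply simp
      apply (rule xs)
      done
  next
    fix x assume "x \<in> suslin (\<lambda>s. A' s \<times> K' s)"
    then obtain \<sigma> where "x \<in> (\<Inter>n. A' (pre \<sigma> (Suc n)) \<times> K' (pre \<sigma> (Suc n)))"
      unfolding suslin_def by blast
    then have "\<And>i j. x \<in> A i (pre (proj \<sigma> i) (Suc j)) \<times> K i (pre (proj \<sigma> i) (Suc j))"
      unfolding lev_all by blast
    then show "x \<in> (\<Inter>i. P i)" unfolding AK A_def K_def suslin_def by blast
  qed
  have "\<forall>s. A' s \<in> sets M" "\<forall>s. compact (K' s)"
    using AK(2,3) by (auto simp: A'_def K'_def A_def K_def split: prod.split)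
  then show ?thesis unfolding eq SP_def mem_Collect_eq
    by (intro exI[of _ A'] exI[of _ K'] conjI) auto
qed

lemma SP_Un: "X \<in> SP M \<Longrightarrow> Y \<in> SP M \<Longrightarrow> X \<union> Y \<in> SP M"
proof -
  assume "X \<in> SP M" "Y \<in> SP M"
  then have "(\<Union>i::nat. if i = 0 then X else Y) \<in> SP M" by (intro SP_Union) auto
  moreover have "(\<Union>i::nat. if i = 0 then X else Y) = X \<union> Y"
  proof (intro equalityI subsetI)
    fix x assume "x \<in> (\<Union>i::nat. if i = 0 then X else Y)"
    then show "x \<in> X \<union> Y" by (auto split: if_splits)
  next
    fix x assume "x \<in> X \<union> Y"
    then show "x \<in> (\<Union>i::nat. if i = 0 then X else Y)"
    proof
      assume "x \<in> X" then show ?thesis by (intro UN_I[of 0]) auto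
    next
      assume "x \<in> Y" then show ?thesis by (intro UN_I[of 1]) auto
    qed
  qed
  ultimately show ?thesis by simp
qed

lemma SP_Int: "X \<in> SP M \<Longrightarrow> Y \<in> SP M \<Longrightarrow> X \<inter> Y \<in> SP M"
proof -
  assume "X \<in> SP M" "Y \<in> SP M"
  then have "(\<Inter>i::nat. if i = 0 then X else Y) \<in> SP M" by (intro SP_Inter) auto
  moreover have "(\<Inter>i::nat. if i = 0 then X else Y) = X \<inter> Y"
  proof (intro equalityI subsetI)
    fix x assume x: "x \<in> (\<Inter>i::nat. if i = 0 then X else Y)"
    have "x \<in> X" using x by (drule_tac INT_D[of _ _ _ 0]) auto
    moreover have "x \<in> Y" using x by (drule_tac INT_D[of _ _ _ 1]) auto
    ultimately show "x \<in> X \<inter> Y" by blast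
  next
    fix x assume "x \<in> X \<inter> Y"
    then show "x \<in> (\<Inter>i::nat. if i = 0 then X else Y)" by auto
  qed
  ultimately show ?thesis by simp
qed

lemma SP_proj:
  assumes "P \<in> SP M"
  shows "\<exists>A'. (\<forall>s. A' s \<in> sets M) \<and> fst ` P = suslin A'"
proof -
  obtain A K where P: "P = suslin (\<lambda>s. A s \<times> K s)" and A: "\<And>s. A s \<in> sets M"
    and K: "\<And>s. compact (K s)"
    using assms unfolding SP_def by blast
  define IA where "IA s = (\<Inter>k\<in>{1..length s}. A (take k s))" for s
  define IK where "IK s = (\<Inter>k\<in>{1..length s}. K (take k s))" for s
  define A' where "A' s = (if s = [] \<or> IK s = {} then {} else IA s)" for s
  have A'_sets: "A' s \<in> sets M" for s
  proof (cases "s = [] \<or> IK s = {}")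
    case True then show ?thesis by (simp add: A'_def)
  next
    case False
    have ne: "{1..length s} \<noteq> {}" using False by (cases s) auto
    then have "IA s \<in> sets M" unfolding IA_def using A by (intro sets.finite_INT) auto
    then show ?thesis using False by (simp add: A'_def)
  qed
  have IApre: "IA (pre \<sigma> (Suc n)) = (\<Inter>k\<in>{1..Suc n}. A (pre \<sigma> k))" for \<sigma> n
    unfolding IA_def by (intro INF_cong) (auto simp: take_pre)
  have IKpre: "IK (pre \<sigma> (Suc n)) = (\<Inter>k\<in>{1..Suc n}. K (pre \<sigma> k))" for \<sigma> n
    unfolding IK_def by (intro INF_cong) (auto simp: take_pre)
  have A'pre: "A' (pre \<sigma> (Suc n)) = (if IK (pre \<sigma> (Suc n)) = {} then {} else IA (pre \<sigma> (Suc n)))" for \<sigma> n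
    unfolding A'_def by (simp add: pre_def)
  have "fst ` P = suslin A'"
  proof (intro equalityI subsetI)
    fix x assume "x \<in> fst ` P"
    then obtain y where "(x, y) \<in> P" by force
    then obtain \<sigma> where xy: "\<And>n. (x,y) \<in> A (pre \<sigma> (Suc n)) \<times> K (pre \<sigma> (Suc n))"
      unfolding P suslin_def by blast
    have "x \<in> A' (pre \<sigma> (Suc n))" for n
    proof -
      have "y \<in> K (pre \<sigma> k)" "x \<in> A (pre \<sigma> k)" if "k \<in> {1..Suc n}" for k
        using xy[of "k - 1"] that by auto
      then have "y \<in> IK (pre \<sigma> (Suc n))" "x \<in> IA (pre \<sigma> (Suc n))"
        unfolding IKpre IApre by blast+
      then show ?thesis unfolding A'pre by auto
    qed
    then show "x \<in> suslin A'" unfolding suslin_def by blast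
  next
    fix x assume "x \<in> suslin A'"
    then obtain \<sigma> where xs: "\<And>n. x \<in> A' (pre \<sigma> (Suc n))" unfolding suslin_def by blast
    define F where "F n = IK (pre \<sigma> (Suc n))" for n
    have Fne: "F n \<noteq> {}" for n using xs[of n] unfolding F_def A'pre by (auto split: if_splits)
    have xIA: "x \<in> IA (pre \<sigma> (Suc n))" for n using xs[of n] unfolding A'pre by (auto split: if_splits)
    have Fc: "compact (F n)" for n
    proof -
      have "F n = K (pre \<sigma> 1) \<inter> (\<Inter>k\<in>{1..Suc n}. K (pre \<sigma> k))"
        unfolding F_def IKpre by auto
      also have "compact \<dots>"
        using K by (intro compact_Int_closed closed_INT ballI compact_imp_closed) auto
      finally show ?thesis .
    qed
    have Fmono: "F n \<subseteq> F m" if "m \<le> n" for m n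
      unfolding F_def IKpre using that by (intro INT_anti_mono) auto
    have "\<Inter>(range F) \<noteq> {}" by (rule compact_nest[OF Fc Fne Fmono])
    then obtain y where y: "\<And>n. y \<in> F n" by blast
    have "(x, y) \<in> A (pre \<sigma> (Suc n)) \<times> K (pre \<sigma> (Suc n))" for n
    proof -
      have "y \<in> (\<Inter>k\<in>{1..Suc n}. K (pre \<sigma> k))" using y[of n] unfolding F_def IKpre .
      moreover have "x \<in> (\<Inter>k\<in>{1..Suc n}. A (pre \<sigma> k))" using xIA[of n] unfolding IApre .
      ultimately show ?thesis by auto
    qed
    then have "(x, y) \<in> P" unfolding P suslin_def by blast
    then show "x \<in> fst ` P" by (rule rev_image_eqI) simp
  qed
  then show ?thesis using A'_sets by blast
qed

lemma SP_open:
  assumes "A \<in> sets M" "open U"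
  shows "A \<times> U \<in> SP M"
proof -
  have "\<exists>C. (\<forall>n::nat. compact (C n)) \<and> \<Union>(range C) = U"
  proof (rule open_Union_compact_subsets[OF assms(2)])
    fix C :: "nat \<Rightarrow> real set"
    assume c1: "\<And>n. compact (C n)" and c2: "\<Union>(range C) = U"
    show "\<exists>C. (\<forall>n::nat. compact (C n)) \<and> \<Union>(range C) = U"
      using c1 c2 by (intro exI[of _ C] conjI allI)
  qed
  then obtain C where C: "\<forall>n::nat. compact (C n)" "\<Union>(range C) = U" by (elim exE conjE)
  have "A \<times> U = (\<Union>n. A \<times> C n)" using C(2) by blast
  also have "\<dots> \<in> SP M" using assms C(1) by (intro SP_Union SP_const) auto
  finally show ?thesis .
qed

lemma SP_closed:
  assumes "A \<in> sets M" "closed F"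
  shows "A \<times> (F::real set) \<in> SP M"
proof -
  have "F = (\<Union>n::nat. F \<inter> {- real n..real n})"
  proof (intro equalityI subsetI)
    fix x assume "x \<in> F"
    obtain n :: nat where "\<bar>x\<bar> \<le> real n" using real_arch_simple by blast
    then show "x \<in> (\<Union>n::nat. F \<inter> {- real n..real n})" using \<open>x \<in> F\<close> by (intro UN_I[of n]) auto
  qed auto
  then have "A \<times> F = (\<Union>n::nat. A \<times> (F \<inter> {- real n..real n}))" by blast
  also have "\<dots> \<in> SP M" using assms
    by (intro SP_Union SP_const closed_Int_compact compact_Icc) auto
  finally show ?thesis .
qed

lemma SP_empty: "{} \<in> SP M"
  using SP_const[of "{}" M "{}"] by simp

lemma SP_sets:
  assumes "P \<in> sets (M \<Otimes>\<^sub>M (borel :: real measure))"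
  shows "P \<in> SP M"
proof -
  let ?\<Omega> = "space M \<times> (UNIV :: real set)"
  have full: "?\<Omega> \<in> SP M" by (intro SP_open) auto
  have inner: "\<forall>a\<in>sets M. a \<times> b \<in> SP M \<and> ?\<Omega> - a \<times> b \<in> SP M"
    if "b \<in> sigma_sets UNIV {S. open S}" for b :: "real set"
    using that
  proof (induction rule: sigma_sets.induct)
    case (Basic b)
    show ?case
    proof
      fix a assume a: "a \<in> sets M"
      have asub: "a \<subseteq> space M" using a sets.sets_into_space by blast
      have "?\<Omega> - a \<times> b = (space M - a) \<times> UNIV \<union> a \<times> (- b)" using asub by auto
      also have "\<dots> \<in> SP M" using a Basic
        by (intro SP_Un SP_open SP_closed) (auto simp: closed_Compl)
      finally show "a \<times> b \<in> SP M \<and> ?\<Omega> - a \<times> b \<in> SP M" using a Basic by (auto intro: SP_open)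
    qed
  next
    case Empty
    then show ?case using full SP_empty[of M] by simp
  next
    case (Compl b)
    show ?case
    proof
      fix a assume a: "a \<in> sets M"
      have asub: "a \<subseteq> space M" using a sets.sets_into_space by blast
      have "a \<times> (UNIV - b) = (?\<Omega> - a \<times> b) \<inter> (a \<times> UNIV)" using asub by auto
      also have "\<dots> \<in> SP M" using a Compl.IH by (intro SP_Int SP_open) auto
      finally have 1: "a \<times> (UNIV - b) \<in> SP M" .
      have "?\<Omega> - a \<times> (UNIV - b) = (space M - a) \<times> UNIV \<union> a \<times> b" using asub by auto
      also have "\<dots> \<in> SP M"
      proof (rule SP_Un)
        show "(space M - a) \<times> UNIV \<in> SP M" using a by (intro SP_open) auto
        show "a \<times> b \<in> SP M" using a Compl.IH by blast
      qed
      finally show "a \<times> (UNIV - b) \<in> SP M \<and> ?\<Omega> - a \<times> (UNIV - b) \<in> SP M" using 1 by simp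
    qed
  next
    case (Union b)
    show ?case
    proof
      fix a assume a: "a \<in> sets M"
      have "a \<times> (\<Union>i. b i) = (\<Union>i. a \<times> b i)" by blast
      also have "\<dots> \<in> SP M" using a Union.IH by (intro SP_Union) auto
      finally have 1: "a \<times> (\<Union>i. b i) \<in> SP M" .
      have "?\<Omega> - a \<times> (\<Union>i. b i) = (\<Inter>i. ?\<Omega> - a \<times> b i)" by blast
      also have "\<dots> \<in> SP M" using a Union.IH by (intro SP_Inter) auto
      finally show "a \<times> (\<Union>i. b i) \<in> SP M \<and> ?\<Omega> - a \<times> (\<Union>i. b i) \<in> SP M" using 1 by simp
    qed
  qed
  have "P \<in> sigma_sets ?\<Omega> {a \<times> b | a b. a \<in> sets M \<and> b \<in> sets (borel :: real measure)}"
    using assms by (simp add: sets_pair_measure)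
  then have "P \<in> SP M \<and> ?\<Omega> - P \<in> SP M"
  proof (induction rule: sigma_sets.induct)
    case (Basic P)
    then obtain a b where "P = a \<times> b" "a \<in> sets M" "b \<in> sigma_sets UNIV {S. open S}"
      by (auto simp: sets_borel)
    then show ?case using inner by blast
  next
    case Empty
    then show ?case using full SP_empty[of M] by simp
  next
    case (Compl P)
    have "?\<Omega> - (?\<Omega> - P) = P" using SP_sub[of P M] Compl.IH by blast
    then show ?case using Compl.IH by simp
  next
    case (Union P)
    have "?\<Omega> - (\<Union>i. P i) = (\<Inter>i. ?\<Omega> - P i)" by blast
    moreover have "(\<Inter>i. ?\<Omega> - P i) \<in> SP M" using Union.IH by (intro SP_Inter) blast
    moreover have "(\<Union>i. P i) \<in> SP M" using Union.IH by (intro SP_Union) blast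
    ultimately show ?case by simp
  qed
  then show ?thesis by blast
qed

lemma proj_sets:
  assumes "prob_space M" "complete_measure M" "P \<in> sets (M \<Otimes>\<^sub>M (borel :: real measure))"
  shows "fst ` P \<in> sets M"
proof -
  interpret prob_space M by fact
  obtain A' where A': "\<And>s. A' s \<in> sets M" "fst ` P = suslin A'"
    using SP_proj[OF SP_sets[OF assms(3)]] by blast
  have "finite_measure M" by unfold_locales
  then show ?thesis unfolding A'(2) using suslin_complete assms(2) A'(1) by blast
qed

lemma to_MB:
  assumes "A \<in> sets (prod_time M)"
  shows "A \<in> sets (M \<Otimes>\<^sub>M (borel :: real measure))"
proof -
  let ?S = "space M \<times> {0::real..}"
  have S: "?S \<in> sets (M \<Otimes>\<^sub>M (borel :: real measure))" by (intro pair_measureI) auto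
  have m: "(\<lambda>x. x) \<in> measurable (restrict_space (M \<Otimes>\<^sub>M (borel :: real measure)) ?S) (prod_time M)"
    unfolding prod_time_def
  proof (rule measurable_pair)
    show "fst \<circ> (\<lambda>x. x) \<in> measurable (restrict_space (M \<Otimes>\<^sub>M borel) ?S) M"
      by (simp add: measurable_restrict_space1)
    show "snd \<circ> (\<lambda>x. x) \<in> measurable (restrict_space (M \<Otimes>\<^sub>M borel) ?S) (restrict_space borel {0..})"
      by (rule measurable_restrict_space2)
         (auto simp: space_restrict_space space_pair_measure intro: measurable_restrict_space1)
  qed
  have "(\<lambda>x. x) -` A \<inter> space (restrict_space (M \<Otimes>\<^sub>M (borel :: real measure)) ?S)
      \<in> sets (restrict_space (M \<Otimes>\<^sub>M (borel :: real measure)) ?S)"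
    using measurable_sets[OF m assms] .
  moreover have "A \<subseteq> ?S" using sets.sets_into_space[OF assms]
    by (simp add: prod_time_def space_pair_measure space_restrict_space)
  moreover have "(\<lambda>x. x) -` A \<inter> space (restrict_space (M \<Otimes>\<^sub>M (borel :: real measure)) ?S) = A"
    using \<open>A \<subseteq> ?S\<close> by (auto simp: space_restrict_space space_pair_measure)
  ultimately have "A \<in> sets (restrict_space (M \<Otimes>\<^sub>M (borel :: real measure)) ?S)"
    by simp
  then show ?thesis using S by (simp add: sets_restrict_space_iff space_pair_measure)
qed

lemma from_MB:
  assumes "A \<in> sets (M \<Otimes>\<^sub>M (borel :: real measure))" "A \<subseteq> space M \<times> {0..}"
  shows "A \<in> sets (prod_time M)"
proof -
  have m: "(\<lambda>x. x) \<in> measurable (prod_time M) (M \<Otimes>\<^sub>M (borel :: real measure))"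
    unfolding prod_time_def
  proof (rule measurable_pair)
    show "fst \<circ> (\<lambda>x. x) \<in> measurable (M \<Otimes>\<^sub>M restrict_space borel {0::real..}) M"
      by simp
    show "snd \<circ> (\<lambda>x. x) \<in> measurable (M \<Otimes>\<^sub>M restrict_space borel {0::real..}) borel"
    proof -
      have "(\<lambda>x. x) \<in> measurable (restrict_space borel {0::real..}) borel"
        by (rule measurable_restrict_space1) simp
      from measurable_compose[OF measurable_snd this] show ?thesis by (simp add: comp_def)
    qed
  qed
  have "(\<lambda>x. x) -` A \<inter> space (prod_time M) \<in> sets (prod_time M)"
    using measurable_sets[OF m assms(1)] .
  moreover have "space (prod_time M) = space M \<times> {0..}"
    by (simp add: prod_time_def space_pair_measure space_restrict_space)
  ultimately show ?thesis using assms(2) by (simp add: Int_absorb2)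
qed

lemma ereal_measurableI:
  fixes f :: "'a \<Rightarrow> ereal"
  assumes "\<And>r::real. {x\<in>space K. f x < ereal r} \<in> sets K"
  shows "f \<in> borel_measurable K"
proof (rule borel_measurableI_less)
  fix y :: ereal
  show "{x\<in>space K. f x < y} \<in> sets K"
  proof (cases y)
    case (real r) then show ?thesis using assms by simp
  next
    case PInf
    have "{x\<in>space K. f x < y} = (\<Union>n::nat. {x\<in>space K. f x < ereal (real n)})"
      using PInf less_PInf_Ex_of_nat by auto
    also have "\<dots> \<in> sets K" using assms by (intro sets.countable_UN) auto
    finally show ?thesis .
  next
    case MInf then show ?thesis by simp
  qed
qed

definition tau :: "('w \<times> real) set \<Rightarrow> real \<Rightarrow> 'w \<Rightarrow> ereal" where
  "tau Q q \<omega> = Inf (ereal ` {u. (\<omega>, u) \<in> Q \<and> q \<le> u})"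

lemma tau_meas:
  assumes "prob_space M" "complete_measure M" "Q \<in> sets (M \<Otimes>\<^sub>M (borel :: real measure))"
  shows "tau Q q \<in> borel_measurable M"
proof (rule ereal_measurableI)
  fix r :: real
  have Qs: "Q \<subseteq> space M \<times> UNIV" using sets.sets_into_space[OF assms(3)] by (simp add: space_pair_measure)
  have "{x\<in>space M. tau Q q x < ereal r} = fst ` (Q \<inter> (space M \<times> {q..<r}))"
  proof (intro equalityI subsetI)
    fix x assume "x \<in> {x\<in>space M. tau Q q x < ereal r}"
    then obtain u where "(x, u) \<in> Q" "q \<le> u" "ereal u < ereal r" "x \<in> space M"
      unfolding tau_def by (auto simp: Inf_less_iff)
    then show "x \<in> fst ` (Q \<inter> (space M \<times> {q..<r}))" by (intro rev_image_eqI[of "(x, u)"]) auto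
  next
    fix x assume "x \<in> fst ` (Q \<inter> (space M \<times> {q..<r}))"
    then obtain u where u: "(x, u) \<in> Q" "q \<le> u" "u < r" "x \<in> space M" by auto
    then have "tau Q q x \<le> ereal u" unfolding tau_def by (intro Inf_lower) auto
    also have "\<dots> < ereal r" using u by simp
    finally show "x \<in> {x\<in>space M. tau Q q x < ereal r}" using u by simp
  qed
  also have "\<dots> \<in> sets M"
    using assms by (intro proj_sets) (auto intro!: sets.Int pair_measureI)
  finally show "{x\<in>space M. tau Q q x < ereal r} \<in> sets M" .
qed

lemma hit_meas:
  assumes "prob_space M" "complete_measure M" "Q \<in> sets (M \<Otimes>\<^sub>M (borel :: real measure))"
    and g: "g \<in> measurable K M" and \<alpha>: "\<alpha> \<in> borel_measurable K" and \<beta>: "\<beta> \<in> borel_measurable K"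
  shows "{x\<in>space K. \<exists>u. (g x, u) \<in> Q \<and> \<alpha> x < ereal u \<and> ereal u < \<beta> x} \<in> sets K"
proof -
  have tm: "(\<lambda>x. tau Q (real_of_rat q) (g x)) \<in> borel_measurable K" for q
    using measurable_compose[OF g tau_meas[OF assms(1-3)]] by (simp add: comp_def)
  have "{x\<in>space K. \<exists>u. (g x, u) \<in> Q \<and> \<alpha> x < ereal u \<and> ereal u < \<beta> x} =
    (\<Union>q::rat. {x\<in>space K. \<alpha> x < ereal (real_of_rat q) \<and> tau Q (real_of_rat q) (g x) < \<beta> x})"
  proof (intro equalityI subsetI)
    fix x assume "x \<in> {x\<in>space K. \<exists>u. (g x, u) \<in> Q \<and> \<alpha> x < ereal u \<and> ereal u < \<beta> x}"
    then obtain u where x: "x \<in> space K" and u: "(g x, u) \<in> Q" "\<alpha> x < ereal u" "ereal u < \<beta> x" by blast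
    define a0 where "a0 = (if \<alpha> x = -\<infinity> then u - 1 else real_of_ereal (\<alpha> x))"
    have "\<alpha> x \<le> ereal a0" "a0 < u"
      using u(2) unfolding a0_def by (cases "\<alpha> x"; simp)+
    obtain r where r: "r \<in> \<rat>" "a0 < r" "r < u" using Rats_dense_in_real[OF \<open>a0 < u\<close>] by blast
    then obtain q where q: "r = real_of_rat q" by (auto elim: Rats_cases)
    have "\<alpha> x < ereal (real_of_rat q)" using \<open>\<alpha> x \<le> ereal a0\<close> r q by (simp add: le_less_trans)
    moreover have "tau Q (real_of_rat q) (g x) \<le> ereal u"
      unfolding tau_def using u r q by (intro Inf_lower) auto
    then have "tau Q (real_of_rat q) (g x) < \<beta> x" using u(3) by (rule le_less_trans)
    ultimately show "x \<in> (\<Union>q::rat. {x\<in>space K. \<alpha> x < ereal (real_of_rat q) \<and> tau Q (real_of_rat q) (g x) < \<beta> x})"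
      using x by blast
  next
    fix x assume "x \<in> (\<Union>q::rat. {x\<in>space K. \<alpha> x < ereal (real_of_rat q) \<and> tau Q (real_of_rat q) (g x) < \<beta> x})"
    then obtain q where x: "x \<in> space K" "\<alpha> x < ereal (real_of_rat q)" "tau Q (real_of_rat q) (g x) < \<beta> x"
      by blast
    then obtain u where "(g x, u) \<in> Q" "real_of_rat q \<le> u" "ereal u < \<beta> x"
      unfolding tau_def by (auto simp: Inf_less_iff)
    moreover have "\<alpha> x < ereal u" using x(2) \<open>real_of_rat q \<le> u\<close> by (simp add: less_le_trans)
    ultimately show "x \<in> {x\<in>space K. \<exists>u. (g x, u) \<in> Q \<and> \<alpha> x < ereal u \<and> ereal u < \<beta> x}"
      using x by blast
  qed
  also have "\<dots> \<in> sets K"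
  proof (intro sets.countable_UN ballI subsetI, clarify)
    fix q :: rat
    have "{x\<in>space K. \<alpha> x < ereal (real_of_rat q) \<and> tau Q (real_of_rat q) (g x) < \<beta> x} =
      {x\<in>space K. \<alpha> x < (\<lambda>_. ereal (real_of_rat q)) x} \<inter> {x\<in>space K. tau Q (real_of_rat q) (g x) < \<beta> x}"
      by auto
    also have "\<dots> \<in> sets K"
      using \<alpha> \<beta> tm[of q] by (intro sets.Int borel_measurable_less) auto
    finally show "{x\<in>space K. \<alpha> x < ereal (real_of_rat q) \<and> tau Q (real_of_rat q) (g x) < \<beta> x} \<in> sets K" .
  qed
  finally show ?thesis .
qed

definition Dfun :: "('w \<times> real) set \<Rightarrow> 'w \<times> real \<Rightarrow> ereal" where
  "Dfun N x = Inf (ereal ` {v. (fst x, v) \<in> N \<and> snd x \<le> v})"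

lemma D_meas:
  assumes "prob_space M" "complete_measure M" "N \<in> sets (M \<Otimes>\<^sub>M (borel :: real measure))"
  shows "Dfun N \<in> borel_measurable (M \<Otimes>\<^sub>M (borel :: real measure))"
proof (rule ereal_measurableI)
  fix c :: real
  let ?K = "M \<Otimes>\<^sub>M (borel :: real measure)"
  have "{x\<in>space ?K. Dfun N x < ereal c} =
    (N \<inter> {x\<in>space ?K. snd x < c}) \<union>
    {x\<in>space ?K. \<exists>u. (fst x, u) \<in> N \<and> ereal (snd x) < ereal u \<and> ereal u < (\<lambda>_. ereal c) x}"
  proof (intro equalityI subsetI)
    fix x assume "x \<in> {x\<in>space ?K. Dfun N x < ereal c}"
    then obtain v where x: "x \<in> space ?K" and v: "(fst x, v) \<in> N" "snd x \<le> v" "v < c"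
      unfolding Dfun_def by (auto simp: Inf_less_iff)
    show "x \<in> (N \<inter> {x\<in>space ?K. snd x < c}) \<union>
      {x\<in>space ?K. \<exists>u. (fst x, u) \<in> N \<and> ereal (snd x) < ereal u \<and> ereal u < (\<lambda>_. ereal c) x}"
    proof (cases "v = snd x")
      case True
      then have "x \<in> N" using v(1) by simp
      then show ?thesis using x v True by auto
    next
      case False
      then show ?thesis using x v by auto
    qed
  next
    fix x assume x: "x \<in> (N \<inter> {x\<in>space ?K. snd x < c}) \<union>
      {x\<in>space ?K. \<exists>u. (fst x, u) \<in> N \<and> ereal (snd x) < ereal u \<and> ereal u < (\<lambda>_. ereal c) x}"
    then have xs: "x \<in> space ?K" using sets.sets_into_space[OF assms(3)] by blast
    from x obtain v where v: "(fst x, v) \<in> N" "snd x \<le> v" "v < c"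
    proof
      assume "x \<in> N \<inter> {x\<in>space ?K. snd x < c}"
      then show thesis using that[of "snd x"] by auto
    next
      assume "x \<in> {x\<in>space ?K. \<exists>u. (fst x, u) \<in> N \<and> ereal (snd x) < ereal u \<and> ereal u < (\<lambda>_. ereal c) x}"
      then show thesis using that by force
    qed
    have "Dfun N x \<le> ereal v" unfolding Dfun_def using v by (intro Inf_lower) auto
    also have "\<dots> < ereal c" using v by simp
    finally show "x \<in> {x\<in>space ?K. Dfun N x < ereal c}" using xs by simp
  qed
  also have "\<dots> \<in> sets ?K"
  proof (intro sets.Un sets.Int)
    show "N \<in> sets ?K" by fact
    show "{x\<in>space ?K. snd x < c} \<in> sets ?K" by measurable
    show "{x\<in>space ?K. \<exists>u. (fst x, u) \<in> N \<and> ereal (snd x) < ereal u \<and> ereal u < (\<lambda>_. ereal c) x} \<in> sets ?K"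
      using assms by (intro hit_meas) auto
  qed
  finally show "{x\<in>space ?K. Dfun N x < ereal c} \<in> sets ?K" .
qed

lemma interval_split:
  fixes I :: "real set"
  assumes "is_interval I"
  shows "c \<in> I \<longleftrightarrow> (Inf (ereal ` I) < ereal c \<and> ereal c < Sup (ereal ` I)) \<or>
     (c \<in> I \<and> ereal c = Inf (ereal ` I)) \<or> (c \<in> I \<and> ereal c = Sup (ereal ` I))"
proof
  assume c: "c \<in> I"
  then have "Inf (ereal ` I) \<le> ereal c" "ereal c \<le> Sup (ereal ` I)"
    by (auto intro: INF_lower SUP_upper)
  then show "(Inf (ereal ` I) < ereal c \<and> ereal c < Sup (ereal ` I)) \<or>
     (c \<in> I \<and> ereal c = Inf (ereal ` I)) \<or> (c \<in> I \<and> ereal c = Sup (ereal ` I))"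
    using c by (auto simp: order.order_iff_strict)
next
  assume "(Inf (ereal ` I) < ereal c \<and> ereal c < Sup (ereal ` I)) \<or>
     (c \<in> I \<and> ereal c = Inf (ereal ` I)) \<or> (c \<in> I \<and> ereal c = Sup (ereal ` I))"
  then show "c \<in> I"
  proof (elim disjE conjE)
    assume "Inf (ereal ` I) < ereal c" "ereal c < Sup (ereal ` I)"
    then obtain y z where "y \<in> I" "ereal y < ereal c" "z \<in> I" "ereal c < ereal z"
      by (auto simp: Inf_less_iff less_Sup_iff)
    then show "c \<in> I" using assms unfolding is_interval_1 by (meson less_eq_ereal_def less_ereal.simps(1) order_less_imp_le)
  qed
qed

lemma ereal_add_less: "b \<noteq> -\<infinity> \<Longrightarrow> ereal (t + c) < ereal t + b \<longleftrightarrow> ereal c < b"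
  by (cases b) auto

lemma E2:
  fixes G :: "real \<Rightarrow> bool" and Dx :: ereal and t a0 :: real and b :: ereal
  assumes int: "\<And>c. c \<in> I \<longleftrightarrow> (ereal a0 < ereal c \<and> ereal c < b) \<or> (c \<in> I \<and> ereal c = ereal a0) \<or> (c \<in> I \<and> ereal c = b)"
    and bnm: "b \<noteq> -\<infinity>"
  shows "(\<exists>u. G u \<and> u - t \<in> I \<and> ereal u \<le> Dx) \<longleftrightarrow>
    (\<exists>u. G u \<and> ereal (t + a0) < ereal u \<and> ereal u < min (ereal t + b) Dx) \<or>
    (Dx \<noteq> \<infinity> \<and> G (real_of_ereal Dx) \<and> ereal (t + a0) < Dx \<and> Dx < ereal t + b) \<or>
    ((\<exists>c\<in>I. ereal c = ereal a0) \<and> G (t + a0) \<and> ereal (t + a0) \<le> Dx) \<or>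
    ((\<exists>c\<in>I. ereal c = b) \<and> G (t + real_of_ereal b) \<and> ereal (t + real_of_ereal b) \<le> Dx)"
    (is "?L \<longleftrightarrow> ?R1 \<or> ?R2 \<or> ?R3 \<or> ?R4")
proof
  assume ?L
  then obtain u where u: "G u" "u - t \<in> I" "ereal u \<le> Dx" by blast
  from int[of "u - t"] u(2) consider
      "ereal a0 < ereal (u - t)" "ereal (u - t) < b" | "ereal (u - t) = ereal a0" | "ereal (u - t) = b"
    by blast
  then show "?R1 \<or> ?R2 \<or> ?R3 \<or> ?R4"
  proof cases
    case 1
    have a: "ereal (t + a0) < ereal u" using 1(1) by simp
    have b: "ereal u < ereal t + b" using ereal_add_less[OF bnm, of t "u - t"] 1(2) by simp
    show ?thesis
    proof (cases "ereal u < Dx")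
      case True
      then have ?R1 using a b u(1) by auto
      then show ?thesis by blast
    next
      case False
      then have "Dx = ereal u" using u(3) by auto
      then have ?R2 using a b u(1) by auto
      then show ?thesis by blast
    qed
  next
    case 2
    then have "u = t + a0" by simp
    then have ?R3 using u 2 by auto
    then show ?thesis by blast
  next
    case 3
    then have "real_of_ereal b = u - t" by auto
    then have ?R4 using u 3 by (auto intro!: bexI[of _ "u - t"])
    then show ?thesis by blast
  qed
next
  assume "?R1 \<or> ?R2 \<or> ?R3 \<or> ?R4"
  then show ?L
  proof (elim disjE)
    assume ?R1
    then obtain u where u: "G u" "ereal (t + a0) < ereal u" "ereal u < ereal t + b" "ereal u < Dx" by auto
    have "ereal a0 < ereal (u - t)" using u(2) by simp
    moreover have "ereal (u - t) < b" using ereal_add_less[OF bnm, of t "u - t"] u(3) by simp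
    ultimately have "u - t \<in> I" using int by blast
    then show ?L using u by (intro exI[of _ u]) auto
  next
    assume R2: ?R2
    then obtain d where d: "Dx = ereal d" by (cases Dx) auto
    have "ereal a0 < ereal (d - t)" using R2 d by simp
    moreover have "ereal (d - t) < b" using ereal_add_less[OF bnm, of t "d - t"] R2 d by simp
    ultimately have "d - t \<in> I" using int by blast
    then show ?L using R2 d by (intro exI[of _ d]) auto
  next
    assume R3: ?R3
    then have "a0 \<in> I" by auto
    then show ?L using R3 by (intro exI[of _ "t + a0"]) auto
  next
    assume R4: ?R4
    then obtain c where c: "c \<in> I" "ereal c = b" by blast
    then have "real_of_ereal b = c" by auto
    then show ?L using R4 c by (intro exI[of _ "t + c"]) auto
  qed
qed

theorem lemma4p6:
  fixes M :: "'w measure"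
    and X :: "real \<Rightarrow> 'w \<Rightarrow> 'e::polish_space"
    and B :: "'ap \<Rightarrow> 'e set"
    and \<phi>1 \<phi>2 :: "'ap mtl"
    and I :: "real set"
  assumes "prob_space M"
    and "complete_measure M"
    and "\<And>t. 0 \<le> t \<Longrightarrow> X t \<in> borel_measurable M"
    and "\<And>a. B a \<in> sets borel"
    and "wf_mtl \<phi>1" and "wf_mtl \<phi>2"
    and "denot M X B \<phi>1 \<in> sets (prod_time M)"
    and "denot M X B \<phi>2 \<in> sets (prod_time M)"
    and "time_interval I"
  shows "denot M X B (Until \<phi>1 I \<phi>2) \<in> sets (prod_time M)"
proof -
  let ?MB = "M \<Otimes>\<^sub>M (borel :: real measure)"
  define P1 where "P1 = denot M X B \<phi>1"
  define P2 where "P2 = denot M X B \<phi>2"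
  have P1s: "P1 \<in> sets ?MB" using assms(7) to_MB unfolding P1_def by blast
  have P2s[measurable]: "P2 \<in> sets ?MB" using assms(8) to_MB unfolding P2_def by blast
  define N where "N = (space M \<times> {0::real..}) - P1"
  have Ns: "N \<in> sets ?MB" unfolding N_def using P1s by (intro sets.Diff pair_measureI) auto
  define D where "D = Dfun N"
  have Dm[measurable]: "D \<in> borel_measurable ?MB" unfolding D_def using assms(1,2) Ns by (rule D_meas)
  have Iint: "is_interval I" and I0: "I \<subseteq> {0..}" using assms(9) by (auto simp: time_interval_def)
  have sub: "denot M X B (Until \<phi>1 I \<phi>2) \<subseteq> space M \<times> {0..}" by (auto simp: denot_def)
  show ?thesis
  proof (cases "I = {}")
    case True
    then have "denot M X B (Until \<phi>1 I \<phi>2) = {}" by (auto simp: denot_def)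
    then show ?thesis by simp
  next
    case False
    then obtain c0 where c0: "c0 \<in> I" by blast
    define a where "a = Inf (ereal ` I)"
    define b where "b = Sup (ereal ` I)"
    define a0 where "a0 = real_of_ereal a"
    define b0 where "b0 = real_of_ereal b"
    have "0 \<le> a" unfolding a_def using I0 by (auto intro!: INF_greatest)
    moreover have "a \<le> ereal c0" unfolding a_def using c0 by (auto intro: INF_lower)
    ultimately have a_fin: "a = ereal a0" unfolding a0_def by (cases a) auto
    have "ereal c0 \<le> b" unfolding b_def using c0 by (auto intro: SUP_upper)
    then have bnm: "b \<noteq> -\<infinity>" by auto
    have int: "c \<in> I \<longleftrightarrow> (ereal a0 < ereal c \<and> ereal c < b) \<or> (c \<in> I \<and> ereal c = ereal a0) \<or> (c \<in> I \<and> ereal c = b)" for c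
      using interval_split[OF Iint, of c] unfolding a_def[symmetric] b_def[symmetric] a_fin .
    define S1 where "S1 = {x\<in>space ?MB. \<exists>u. (fst x, u) \<in> P2 \<and> ereal (snd x + a0) < ereal u \<and> ereal u < min (ereal (snd x) + b) (D x)}"
    define S2 where "S2 = {x\<in>space ?MB. D x \<noteq> \<infinity> \<and> (fst x, real_of_ereal (D x)) \<in> P2 \<and> ereal (snd x + a0) < D x \<and> D x < ereal (snd x) + b}"
    define S3 where "S3 = {x\<in>space ?MB. (\<exists>c\<in>I. ereal c = ereal a0) \<and> (fst x, snd x + a0) \<in> P2 \<and> ereal (snd x + a0) \<le> D x}"
    define S4 where "S4 = {x\<in>space ?MB. (\<exists>c\<in>I. ereal c = b) \<and> (fst x, snd x + b0) \<in> P2 \<and> ereal (snd x + b0) \<le> D x}"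
    define S0 where "S0 = {x\<in>space ?MB. 0 \<le> snd x}"
    have S1s: "S1 \<in> sets ?MB" unfolding S1_def
      using assms(1,2) P2s by (intro hit_meas) auto
    have S2s: "S2 \<in> sets ?MB" unfolding S2_def by measurable
    have S3s: "S3 \<in> sets ?MB" unfolding S3_def by measurable
    have S4s: "S4 \<in> sets ?MB" unfolding S4_def by measurable
    have S0s: "S0 \<in> sets ?MB" unfolding S0_def by measurable
    have key: "(\<forall>s'\<in>{t..<u}. sat X B \<omega> s' \<phi>1) \<longleftrightarrow> ereal u \<le> D (\<omega>, t)"
      if "\<omega> \<in> space M" "0 \<le> t" for \<omega> t u
    proof -
      have "ereal u \<le> D (\<omega>, t) \<longleftrightarrow> (\<forall>v. (\<omega>, v) \<in> N \<and> t \<le> v \<longrightarrow> u \<le> v)"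
        unfolding D_def Dfun_def by (auto simp: le_Inf_iff)
      also have "\<dots> \<longleftrightarrow> (\<forall>v. 0 \<le> v \<and> \<not> sat X B \<omega> v \<phi>1 \<and> t \<le> v \<longrightarrow> u \<le> v)"
        using that by (auto simp: N_def P1_def denot_def)
      also have "\<dots> \<longleftrightarrow> (\<forall>s'\<in>{t..<u}. sat X B \<omega> s' \<phi>1)"
        using that by (auto simp: not_le) (meson not_le order_trans)+
      finally show ?thesis by simp
    qed
    have E1: "(\<exists>s\<in>I. sat X B \<omega> (t + s) \<phi>2 \<and> (\<forall>s'\<in>{t..<t + s}. sat X B \<omega> s' \<phi>1)) \<longleftrightarrow>
       (\<exists>u. (\<omega>, u) \<in> P2 \<and> u - t \<in> I \<and> ereal u \<le> D (\<omega>, t))"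
      if w: "\<omega> \<in> space M" "0 \<le> t" for \<omega> t
    proof
      assume "\<exists>s\<in>I. sat X B \<omega> (t + s) \<phi>2 \<and> (\<forall>s'\<in>{t..<t + s}. sat X B \<omega> s' \<phi>1)"
      then obtain s where s: "s \<in> I" "sat X B \<omega> (t + s) \<phi>2" "\<forall>s'\<in>{t..<t + s}. sat X B \<omega> s' \<phi>1" by blast
      have "0 \<le> s" using s(1) I0 by auto
      then have "(\<omega>, t + s) \<in> P2" using s(2) w by (simp add: P2_def denot_def)
      moreover have "ereal (t + s) \<le> D (\<omega>, t)" using key[OF w, of "t + s"] s(3) by simp
      ultimately show "\<exists>u. (\<omega>, u) \<in> P2 \<and> u - t \<in> I \<and> ereal u \<le> D (\<omega>, t)"
        using s(1) by (intro exI[of _ "t + s"]) auto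
    next
      assume "\<exists>u. (\<omega>, u) \<in> P2 \<and> u - t \<in> I \<and> ereal u \<le> D (\<omega>, t)"
      then obtain u where u: "(\<omega>, u) \<in> P2" "u - t \<in> I" "ereal u \<le> D (\<omega>, t)" by blast
      have "sat X B \<omega> (t + (u - t)) \<phi>2" using u(1) by (simp add: P2_def denot_def)
      moreover have "\<forall>s'\<in>{t..<t + (u - t)}. sat X B \<omega> s' \<phi>1" using key[OF w, of u] u(3) by simp
      ultimately show "\<exists>s\<in>I. sat X B \<omega> (t + s) \<phi>2 \<and> (\<forall>s'\<in>{t..<t + s}. sat X B \<omega> s' \<phi>1)"
        using u(2) by blast
    qed
    have "denot M X B (Until \<phi>1 I \<phi>2) = S0 \<inter> (S1 \<union> S2 \<union> S3 \<union> S4)"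
    proof (intro equalityI subsetI)
      fix x assume x: "x \<in> denot M X B (Until \<phi>1 I \<phi>2)"
      obtain \<omega> t where xe: "x = (\<omega>, t)" by (cases x)
      have w: "\<omega> \<in> space M" "0 \<le> t" and st: "sat X B \<omega> t (Until \<phi>1 I \<phi>2)"
        using x by (auto simp: xe denot_def)
      have "\<exists>u. (\<omega>, u) \<in> P2 \<and> u - t \<in> I \<and> ereal u \<le> D (\<omega>, t)" using E1[OF w] st by simp
      then have "(\<exists>u. (\<omega>, u) \<in> P2 \<and> ereal (t + a0) < ereal u \<and> ereal u < min (ereal t + b) (D (\<omega>, t))) \<or>
        (D (\<omega>, t) \<noteq> \<infinity> \<and> (\<omega>, real_of_ereal (D (\<omega>, t))) \<in> P2 \<and> ereal (t + a0) < D (\<omega>, t) \<and> D (\<omega>, t) < ereal t + b) \<or>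
        ((\<exists>c\<in>I. ereal c = ereal a0) \<and> (\<omega>, t + a0) \<in> P2 \<and> ereal (t + a0) \<le> D (\<omega>, t)) \<or>
        ((\<exists>c\<in>I. ereal c = b) \<and> (\<omega>, t + real_of_ereal b) \<in> P2 \<and> ereal (t + real_of_ereal b) \<le> D (\<omega>, t))"
        using E2[of I a0 b "\<lambda>u. (\<omega>, u) \<in> P2" t "D (\<omega>, t)", OF int bnm] by blast
      then show "x \<in> S0 \<inter> (S1 \<union> S2 \<union> S3 \<union> S4)"
        using w unfolding S0_def S1_def S2_def S3_def S4_def b0_def
        by (auto simp: xe space_pair_measure)
    next
      fix x assume x: "x \<in> S0 \<inter> (S1 \<union> S2 \<union> S3 \<union> S4)"
      obtain \<omega> t where xe: "x = (\<omega>, t)" by (cases x)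
      have w: "\<omega> \<in> space M" "0 \<le> t" using x by (auto simp: xe S0_def space_pair_measure)
      have "(\<exists>u. (\<omega>, u) \<in> P2 \<and> ereal (t + a0) < ereal u \<and> ereal u < min (ereal t + b) (D (\<omega>, t))) \<or>
        (D (\<omega>, t) \<noteq> \<infinity> \<and> (\<omega>, real_of_ereal (D (\<omega>, t))) \<in> P2 \<and> ereal (t + a0) < D (\<omega>, t) \<and> D (\<omega>, t) < ereal t + b) \<or>
        ((\<exists>c\<in>I. ereal c = ereal a0) \<and> (\<omega>, t + a0) \<in> P2 \<and> ereal (t + a0) \<le> D (\<omega>, t)) \<or>
        ((\<exists>c\<in>I. ereal c = b) \<and> (\<omega>, t + real_of_ereal b) \<in> P2 \<and> ereal (t + real_of_ereal b) \<le> D (\<omega>, t))"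
        using x unfolding S0_def S1_def S2_def S3_def S4_def b0_def by (auto simp: xe)
      then have "\<exists>u. (\<omega>, u) \<in> P2 \<and> u - t \<in> I \<and> ereal u \<le> D (\<omega>, t)"
        using E2[of I a0 b "\<lambda>u. (\<omega>, u) \<in> P2" t "D (\<omega>, t)", OF int bnm] by blast
      then have "sat X B \<omega> t (Until \<phi>1 I \<phi>2)" using E1[OF w] by simp
      then show "x \<in> denot M X B (Until \<phi>1 I \<phi>2)" using w by (simp add: xe denot_def)
    qed
    also have "\<dots> \<in> sets ?MB" using S0s S1s S2s S3s S4s by auto
    finally show ?thesis using sub by (rule from_MB)
  qed
qed

end
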